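(* Let $\mathbf B^{(1)}\in\mathbb Q^{d\times n}$ be an LLL-reduced basis and $\gamma\ge2$. Then $\mathbf B^{(2)}=(\mathbf b_1^{(2)},\dots,\mathbf b_n^{(2)}):=A_{\mathbf B^{(1)},\gamma}\mathbf B^{(1)}$ is LLL-reduced, and for all $i$, \[ \|\mathbf b_1^{(2)}\|/2^n\le\|\tilde{\mathbf b}_i^{(2)}\|\le\|\mathbf b_i^{(2)}\|\le(2\gamma)^i\|\mathbf b_1^{(2)}\|. \]
   Context: Gram–Schmidt orthogonalization of a basis $\mathbf B=(\mathbf b_1,\dots,\mathbf b_n)$: $\tilde{\mathbf b}_1=\mathbf b_1$, $\tilde{\mathbf b}_i=\Pi_{\{\mathbf b_1,\dots,\mathbf b_{i-1}\}^\perp}(\mathbf b_i)$; $\mu_{i,j}:=\langle\tilde{\mathbf b}_i,\mathbf b_j\rangle/\|\tilde{\mathbf b}_i\|^2$. $\mathbf B$ is LLL-reduced if $|\mu_{i,j}|\le 1/2$ for all $i<j$ and $\tfrac34\|\tilde{\mathbf b}_i\|^2\le\|\tilde{\mathbf b}_{i+1}\|^2+\mu_{i,i+1}^2\|\tilde{\mathbf b}_i\|^2$ for $1\le i\le n-1$. For a basis $\mathbf B$ and $\gamma\ge1$: $\alpha_1=1$, $\alpha_i=\max\{\alpha_{i-1},\lceil\|\tilde{\mathbf b}_i\|/(\gamma^i\|\mathbf b_1\|)\rceil\}$, and $A_{\mathbf B,\gamma}$ is the unique linear map with $A_{\mathbf B,\gamma}\tilde{\mathbf b}_i=\tilde{\mathbf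 b}_i/\alpha_i$ for all $i$ and identity on $\{\mathbf b_1,\dots,\mathbf b_n\}^\perp$. *)

theory Defs
  imports "HOL-Analysis.Analysis"
begin

text \<open>A basis is a family b_1,...,b_n of vectors in R^d (indices 1..n), d given by the
finite index type 'd.\<close>

function gso :: "(nat \<Rightarrow> real ^ 'd) \<Rightarrow> nat \<Rightarrow> real ^ 'd" where
  "gso b i = b i - (\<Sum>j\<in>{1..<i}. ((gso b j \<bullet> b i) / (norm (gso b j))\<^sup>2) *\<^sub>R gso b j)"
  by auto
termination by (relation "Wellfounded.measure (\<lambda>(b, i). i)") auto

declare gso.simps [simp del]

definition mu :: "(nat \<Rightarrow> real ^ 'd) \<Rightarrow> nat \<Rightarrow> nat \<Rightarrow> real" where
  "mu b i j = (gso b i \<bullet> b j) / (norm (gso b i))\<^sup>2"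

definition LLL_reduced :: "(nat \<Rightarrow> real ^ 'd) \<Rightarrow> nat \<Rightarrow> bool" where
  "LLL_reduced b n \<longleftrightarrow>
     (\<forall>i j. 1 \<le> i \<and> i < j \<and> j \<le> n \<longrightarrow> \<bar>mu b i j\<bar> \<le> 1/2) \<and>
     (\<forall>i. 1 \<le> i \<and> i \<le> n - 1 \<longrightarrow>
        3/4 * (norm (gso b i))\<^sup>2 \<le> (norm (gso b (i+1)))\<^sup>2 + (mu b i (i+1))\<^sup>2 * (norm (gso b i))\<^sup>2)"

definition rat_basis :: "(nat \<Rightarrow> real ^ 'd) \<Rightarrow> nat \<Rightarrow> bool" where
  "rat_basis b n \<longleftrightarrow> inj_on b {1..n} \<and> independent (b ` {1..n}) \<and>
     (\<forall>i\<in>{1..n}. \<forall>k. b i $ k \<in> \<rat>)"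

fun alpha :: "(nat \<Rightarrow> real ^ 'd) \<Rightarrow> real \<Rightarrow> nat \<Rightarrow> real" where
  "alpha b \<gamma> 0 = 1"
| "alpha b \<gamma> (Suc 0) = 1"
| "alpha b \<gamma> (Suc (Suc k)) = max (alpha b \<gamma> (Suc k))
      (of_int \<lceil>norm (gso b (Suc (Suc k))) / (\<gamma> ^ Suc (Suc k) * norm (b 1))\<rceil>)"

definition A_map :: "(nat \<Rightarrow> real ^ 'd) \<Rightarrow> nat \<Rightarrow> real \<Rightarrow> real ^ 'd \<Rightarrow> real ^ 'd" where
  "A_map b n \<gamma> = (THE f. linear f \<and>
      (\<forall>i\<in>{1..n}. f (gso b i) = (1 / alpha b \<gamma> i) *\<^sub>R gso b i) \<and>
      (\<forall>x. (\<forall>i\<in>{1..n}. x \<bullet> b i = 0) \<longrightarrow> f x = x))"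

end

theory Submission
  imports Defs
begin


lemma gso_eq: "gso b i = b i - (\<Sum>j\<in>{1..<i}. mu b j i *\<^sub>R gso b j)"
  by (subst gso.simps) (simp add: mu_def)

lemma b_eq: "b i = gso b i + (\<Sum>j\<in>{1..<i}. mu b j i *\<^sub>R gso b j)"
  using gso_eq[of b i] by simp

lemma gso_1: "gso b 1 = b 1"
  by (subst gso.simps) simp

lemma inner_sum_orth:
  fixes g :: "nat \<Rightarrow> 'a::real_inner"
  assumes "finite S" "\<forall>k\<in>S. k \<noteq> j \<longrightarrow> g j \<bullet> g k = 0"
  shows "g j \<bullet> (\<Sum>k\<in>S. a k *\<^sub>R g k) = (if j \<in> S then a j * (g j \<bullet> g j) else 0)"
proof -
  have "g j \<bullet> (\<Sum>k\<in>S. a k *\<^sub>R g k) = (\<Sum>k\<in>S. if k = j then a j * (g j \<bullet> g j) else 0)"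
    unfolding inner_sum_right using assms(2) by (intro sum.cong) auto
  also have "... = (if j \<in> S then a j * (g j \<bullet> g j) else 0)"
    using assms(1) by (simp add: sum.delta)
  finally show ?thesis .
qed

lemma gso_orth_lt: "1 \<le> j \<Longrightarrow> j < i \<Longrightarrow> gso b j \<bullet> gso b i = 0"
proof (induction i arbitrary: j rule: less_induct)
  case (less i)
  have orth: "\<forall>k\<in>{1..<i}. k \<noteq> j \<longrightarrow> gso b j \<bullet> gso b k = 0"
  proof (intro ballI impI)
    fix k assume k: "k \<in> {1..<i}" "k \<noteq> j"
    show "gso b j \<bullet> gso b k = 0"
    proof (cases "k < j")
      case True then show ?thesis using less.IH[of j k] less.prems k by (simp add: inner_commute)
    next
      case False then show ?thesis using less.IH[of k j] less.prems k by simp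
    qed
  qed
  have "gso b j \<bullet> gso b i = gso b j \<bullet> b i - gso b j \<bullet> (\<Sum>k\<in>{1..<i}. mu b k i *\<^sub>R gso b k)"
    by (subst gso_eq) (simp add: inner_diff_right)
  also have "... = gso b j \<bullet> b i - mu b j i * (gso b j \<bullet> gso b j)"
    using inner_sum_orth[OF _ orth, of "\<lambda>k. mu b k i"] less.prems by simp
  also have "... = 0"
    by (cases "gso b j = 0") (simp_all add: mu_def power2_norm_eq_inner)
  finally show ?case .
qed

lemma gso_orth: "1 \<le> i \<Longrightarrow> 1 \<le> j \<Longrightarrow> i \<noteq> j \<Longrightarrow> gso b i \<bullet> gso b j = 0"
  by (metis gso_orth_lt inner_commute linorder_neqE_nat)

lemma inner_comb:
  fixes g :: "nat \<Rightarrow> 'a::real_inner"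
  assumes orth: "\<And>i j. 1 \<le> i \<Longrightarrow> 1 \<le> j \<Longrightarrow> i \<noteq> j \<Longrightarrow> g i \<bullet> g j = 0"
    and c: "c k = g k + (\<Sum>j\<in>{1..<k}. m j k *\<^sub>R g j)" and i: "1 \<le> i" "i < k"
  shows "g i \<bullet> c k = m i k * (g i \<bullet> g i)"
proof -
  have o: "\<forall>l\<in>{1..<k}. l \<noteq> i \<longrightarrow> g i \<bullet> g l = 0" using orth i by auto
  have "g i \<bullet> g k = 0" using orth i by auto
  then show ?thesis using inner_sum_orth[OF _ o, of "\<lambda>j. m j k"] i c by (simp add: inner_add_right)
qed

lemma gso_unique:
  fixes g :: "nat \<Rightarrow> real ^ 'd"
  assumes orth: "\<And>i j. 1 \<le> i \<Longrightarrow> 1 \<le> j \<Longrightarrow> i \<noteq> j \<Longrightarrow> g i \<bullet> g j = 0"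
    and c: "\<And>k. 1 \<le> k \<Longrightarrow> k \<le> N \<Longrightarrow> c k = g k + (\<Sum>j\<in>{1..<k}. m j k *\<^sub>R g j)"
  shows "1 \<le> i \<Longrightarrow> i \<le> N \<Longrightarrow> gso c i = g i"
proof (induction i rule: less_induct)
  case (less i)
  have "(\<Sum>j\<in>{1..<i}. mu c j i *\<^sub>R gso c j) = (\<Sum>j\<in>{1..<i}. m j i *\<^sub>R g j)"
  proof (rule sum.cong[OF refl])
    fix j assume j: "j \<in> {1..<i}"
    have gj: "gso c j = g j" using less.IH[of j] j less.prems by auto
    have "g j \<bullet> c i = m j i * (g j \<bullet> g j)" using inner_comb[where g=g and c=c and m=m, OF orth c[OF less.prems]] j by auto
    then show "mu c j i *\<^sub>R gso c j = m j i *\<^sub>R g j"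
      unfolding mu_def gj by (cases "g j = 0") (simp_all add: power2_norm_eq_inner)
  qed
  then show ?case using gso_eq[of c i] c[OF less.prems] by simp
qed

lemma norm_sum_orth:
  fixes v :: "nat \<Rightarrow> 'a::real_inner"
  assumes "finite S" "\<And>i j. i\<in>S \<Longrightarrow> j\<in>S \<Longrightarrow> i\<noteq>j \<Longrightarrow> v i \<bullet> v j = 0"
  shows "(norm (\<Sum>i\<in>S. v i))\<^sup>2 = (\<Sum>i\<in>S. (norm (v i))\<^sup>2)"
  using assms
proof (induction S rule: finite_induct)
  case empty thus ?case by simp
next
  case (insert x F)
  have "v x \<bullet> (\<Sum>i\<in>F. v i) = 0" using insert.prems insert.hyps
    by (auto simp: inner_sum_right intro!: sum.neutral)
  then have "(norm (v x + (\<Sum>i\<in>F. v i)))\<^sup>2 = (norm (v x))\<^sup>2 + (norm (\<Sum>i\<in>F. v i))\<^sup>2"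
    by (intro norm_add_Pythagorean) (simp add: orthogonal_def)
  then show ?case using insert by simp
qed

lemma alpha_ge1: "alpha b \<gamma> i \<ge> 1"
  by (induction b \<gamma> i rule: alpha.induct) auto

lemma alpha_1: "alpha b \<gamma> 1 = 1" by simp

lemma alpha_Suc: "1 \<le> i \<Longrightarrow> alpha b \<gamma> (Suc i) = max (alpha b \<gamma> i) (of_int \<lceil>norm (gso b (Suc i)) / (\<gamma> ^ Suc i * norm (b 1))\<rceil>)"
  by (cases i) auto

lemma alpha_ge_ceil: "2 \<le> i \<Longrightarrow> alpha b \<gamma> i \<ge> of_int \<lceil>norm (gso b i) / (\<gamma> ^ i * norm (b 1))\<rceil>"
  using alpha_Suc[of "i - 1" b \<gamma>] by (cases i) auto



lemma sum_proj:
  fixes e :: "nat \<Rightarrow> real ^ 'd"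
  assumes orth: "\<And>i j. 1 \<le> i \<Longrightarrow> 1 \<le> j \<Longrightarrow> i \<noteq> j \<Longrightarrow> e i \<bullet> e j = 0"
    and k: "k \<in> {1..n}"
  shows "(\<Sum>i\<in>{1..n}. ((e k \<bullet> e i) / (norm (e i))\<^sup>2 * t i) *\<^sub>R e i) = t k *\<^sub>R e k"
proof -
  have "(\<Sum>i\<in>{1..n}. ((e k \<bullet> e i) / (norm (e i))\<^sup>2 * t i) *\<^sub>R e i)
      = (\<Sum>i\<in>{1..n}. if i = k then t k *\<^sub>R e k else 0)"
    using orth k by (intro sum.cong) (auto simp: power2_norm_eq_inner)
  also have "... = t k *\<^sub>R e k" using k by (simp add: sum.delta)
  finally show ?thesis .
qed

lemma A_map_props:
  "linear (A_map b n \<gamma>) \<and> (\<forall>i\<in>{1..n}. A_map b n \<gamma> (gso b i) = (1 / alpha b \<gamma> i) *\<^sub>R gso b i)"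
proof -
  define e where "e = gso b"
  define a where "a = alpha b \<gamma>"
  define P where "P f \<longleftrightarrow> linear f \<and> (\<forall>i\<in>{1..n}. f (e i) = (1 / a i) *\<^sub>R e i) \<and>
      (\<forall>x. (\<forall>i\<in>{1..n}. x \<bullet> b i = 0) \<longrightarrow> f x = x)" for f :: "real^'a \<Rightarrow> real^'a"
  define p where "p x = (\<Sum>i\<in>{1..n}. ((x \<bullet> e i) / (norm (e i))\<^sup>2) *\<^sub>R e i)" for x
  define q where "q x = (\<Sum>i\<in>{1..n}. ((x \<bullet> e i) / (norm (e i))\<^sup>2 * (1 / a i)) *\<^sub>R e i)" for x
  define E where "E x = x - p x + q x" for x
  have orth: "\<And>i j. 1 \<le> i \<Longrightarrow> 1 \<le> j \<Longrightarrow> i \<noteq> j \<Longrightarrow> e i \<bullet> e j = 0"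
    unfolding e_def by (rule gso_orth)
  have ortx: "x \<bullet> e k = 0" if "\<forall>i\<in>{1..n}. x \<bullet> b i = 0" "1 \<le> k" "k \<le> n" for x k
    using that(2,3)
  proof (induction k rule: less_induct)
    case (less k)
    have "x \<bullet> e k = x \<bullet> b k - (\<Sum>j\<in>{1..<k}. mu b j k * (x \<bullet> e j))"
      unfolding e_def by (subst gso_eq) (simp add: inner_diff_right inner_sum_right)
    also have "... = 0" using that(1) less by (simp add: e_def)
    finally show ?case .
  qed
  have pe: "p (e k) = e k" if "k \<in> {1..n}" for k
    using sum_proj[where t="\<lambda>_. 1", OF orth that] by (simp add: p_def)
  have qe: "q (e k) = (1 / a k) *\<^sub>R e k" if "k \<in> {1..n}" for k
    using sum_proj[where t="\<lambda>i. 1 / a i", OF orth that] by (simp add: q_def)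
  have linp: "linear p"
    by (rule linearI) (simp_all add: p_def inner_add_left add_divide_distrib scaleR_add_left
        sum.distrib scaleR_sum_right)
  have linq: "linear q"
    by (rule linearI) (simp_all add: q_def inner_add_left add_divide_distrib distrib_right
        scaleR_add_left sum.distrib scaleR_sum_right)
  have linE: "linear E"
    unfolding E_def using linp linq
    by (intro linear_compose_add linear_compose_sub) (auto simp: linear_ident)
  have PE: "P E"
    unfolding P_def
  proof (intro conjI ballI allI impI)
    show "linear E" by (rule linE)
  next
    fix i assume "i \<in> {1..n}" then show "E (e i) = (1 / a i) *\<^sub>R e i"
      using pe qe by (simp add: E_def)
  next
    fix x assume "\<forall>i\<in>{1..n}. x \<bullet> b i = 0"
    then have "\<forall>i\<in>{1..n}. x \<bullet> e i = 0" using ortx by auto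
    then show "E x = x" by (simp add: E_def p_def q_def)
  qed
  have uniq: "f = E" if "P f" for f
  proof
    fix x
    define r where "r = x - p x"
    have re: "r \<bullet> e k = 0" if "k \<in> {1..n}" for k
    proof -
      have o: "\<forall>i\<in>{1..n}. i \<noteq> k \<longrightarrow> e k \<bullet> e i = 0" using orth that by auto
      have "e k \<bullet> p x = (x \<bullet> e k) / (norm (e k))\<^sup>2 * (e k \<bullet> e k)"
        unfolding p_def using inner_sum_orth[OF _ o, of "\<lambda>i. (x \<bullet> e i) / (norm (e i))\<^sup>2"] that
        by simp
      then have "e k \<bullet> p x = x \<bullet> e k"
        by (cases "e k = 0") (simp_all add: power2_norm_eq_inner)
      then show ?thesis unfolding r_def
        by (simp add: inner_diff_left inner_commute[of "p x"])
    qed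
    have rb: "\<forall>k\<in>{1..n}. r \<bullet> b k = 0"
    proof
      fix k assume k: "k \<in> {1..n}"
      have "r \<bullet> b k = r \<bullet> e k + (\<Sum>j\<in>{1..<k}. mu b j k * (r \<bullet> e j))"
        unfolding e_def by (subst b_eq) (simp add: inner_add_right inner_sum_right)
      also have "... = 0" using re k by simp
      finally show "r \<bullet> b k = 0" .
    qed
    have fl: "linear f" and fe: "\<forall>i\<in>{1..n}. f (e i) = (1 / a i) *\<^sub>R e i"
      and fc: "\<And>x. (\<forall>i\<in>{1..n}. x \<bullet> b i = 0) \<Longrightarrow> f x = x"
      using \<open>P f\<close> unfolding P_def by auto
    have "f (p x) = q x"
      unfolding p_def q_def using fe
      by (simp add: linear_sum[OF fl] linear_scale[OF fl])
    moreover have "f r = r" using fc rb by auto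
    moreover have "x = r + p x" by (simp add: r_def)
    ultimately have "f x = r + q x" by (metis linear_add[OF fl])
    then show "f x = E x" by (simp add: E_def r_def)
  qed
  have "A_map b n \<gamma> = (THE f. P f)"
    unfolding A_map_def P_def e_def a_def by simp
  also have "... = E" using PE uniq by (rule the_equality)
  finally have "A_map b n \<gamma> = E" .
  then show ?thesis using PE unfolding P_def e_def a_def by simp
qed



theorem mainTheorem13:
  fixes b :: "nat \<Rightarrow> real ^ 'd" and n :: nat and \<gamma> :: real
  assumes "rat_basis b n"
    and "LLL_reduced b n"
    and "\<gamma> \<ge> 2"
  shows "LLL_reduced (\<lambda>j. A_map b n \<gamma> (b j)) n \<and>
    (\<forall>i\<in>{1..n}.
       norm (A_map b n \<gamma> (b 1)) / 2 ^ n \<le> norm (gso (\<lambda>j. A_map b n \<gamma> (b j)) i) \<and>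
       norm (gso (\<lambda>j. A_map b n \<gamma> (b j)) i) \<le> norm (A_map b n \<gamma> (b i)) \<and>
       norm (A_map b n \<gamma> (b i)) \<le> (2 * \<gamma>) ^ i * norm (A_map b n \<gamma> (b 1)))"
proof (cases "n = 0")
  case True then show ?thesis by (simp add: LLL_reduced_def)
next
  case False
  then have n1: "1 \<le> n" by simp
  define A where "A = A_map b n \<gamma>"
  define c where "c j = A (b j)" for j
  define a where "a = alpha b \<gamma>"
  define g where "g i = (1 / a i) *\<^sub>R gso b i" for i
  define B where "B = norm (b 1)"
  have cc: "(\<lambda>j. A_map b n \<gamma> (b j)) = c" by (simp add: c_def A_def fun_eq_iff)
  have Alin: "linear A" and Ag: "\<And>i. i\<in>{1..n} \<Longrightarrow> A (gso b i) = g i"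
    using A_map_props[of b n \<gamma>] unfolding A_def g_def a_def by auto
  have a1: "\<And>i. a i \<ge> 1" unfolding a_def by (rule alpha_ge1)
  have orthg: "\<And>i j. 1 \<le> i \<Longrightarrow> 1 \<le> j \<Longrightarrow> i \<noteq> j \<Longrightarrow> g i \<bullet> g j = 0"
    by (simp add: g_def gso_orth)
  have cexp: "c k = g k + (\<Sum>j\<in>{1..<k}. mu b j k *\<^sub>R g j)" if "1 \<le> k" "k \<le> n" for k
  proof -
    have "c k = A (gso b k + (\<Sum>j\<in>{1..<k}. mu b j k *\<^sub>R gso b j))"
      unfolding c_def by (subst b_eq) simp
    also have "... = A (gso b k) + (\<Sum>j\<in>{1..<k}. mu b j k *\<^sub>R A (gso b j))"
      by (simp add: linear_add[OF Alin] linear_sum[OF Alin] linear_scale[OF Alin])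
    also have "... = g k + (\<Sum>j\<in>{1..<k}. mu b j k *\<^sub>R g j)"
      using Ag that by simp
    finally show ?thesis .
  qed
  have gsoc: "\<And>i. 1 \<le> i \<Longrightarrow> i \<le> n \<Longrightarrow> gso c i = g i"
    by (rule gso_unique[where g=g and c=c, OF orthg cexp]) auto
  have muc: "mu c i j = mu b i j" if "1 \<le> i" "i < j" "j \<le> n" for i j
  proof -
    have cj: "c j = g j + (\<Sum>k\<in>{1..<j}. mu b k j *\<^sub>R g k)" using cexp[of j] that by auto
    have "g i \<bullet> c j = mu b i j * (g i \<bullet> g i)"
      using inner_comb[where g=g and c=c and m="\<lambda>k l. mu b k l", OF orthg cj] that by auto
    moreover have "g i = 0 \<Longrightarrow> gso b i = 0" using a1[of i] by (simp add: g_def)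
    ultimately show ?thesis using gsoc[of i] that
      by (cases "g i = 0") (auto simp: mu_def power2_norm_eq_inner)
  qed
  have "b 1 \<in> b ` {1..n}" using n1 by auto
  then have "b 1 \<noteq> 0" using assms(1) unfolding rat_basis_def by (metis dependent_zero)
  then have Bpos: "B > 0" by (simp add: B_def)
  have g1: "g 1 = b 1" using gso_1[of b] by (simp add: g_def a_def)
  have c1: "c 1 = b 1" using cexp[of 1] n1 g1 by simp
  have ng: "norm (g i) = norm (gso b i) / a i" for i
    using a1[of i] by (simp add: g_def)
  have U: "norm (g i) \<le> \<gamma>^i * B" if "1 \<le> i" for i
  proof (cases "i = 1")
    case True then show ?thesis using g1 assms(3) Bpos by (simp add: B_def)
  next
    case False
    then have "a i \<ge> of_int \<lceil>norm (gso b i) / (\<gamma> ^ i * B)\<rceil>"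
      using that alpha_ge_ceil[of i b \<gamma>] by (simp add: a_def B_def)
    then have "a i \<ge> norm (gso b i) / (\<gamma> ^ i * B)"
      by (meson le_of_int_ceiling order_trans)
    moreover have "\<gamma> ^ i * B > 0" using Bpos assms(3) by simp
    ultimately have "norm (gso b i) \<le> a i * (\<gamma> ^ i * B)"
      by (simp add: divide_le_eq mult.commute)
    then show ?thesis using a1[of i] by (simp add: ng divide_le_eq mult.commute)
  qed
  have L: "norm (g (Suc i)) \<ge> \<gamma>^(Suc i) * B / 2" if "1 \<le> i" "a i < a (Suc i)" for i
  proof -
    define x where "x = norm (gso b (Suc i)) / (\<gamma> ^ Suc i * B)"
    have as: "a (Suc i) = max (a i) (of_int \<lceil>x\<rceil>)"
      using alpha_Suc[OF that(1), of b \<gamma>] by (simp add: a_def x_def B_def)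
    then have ax: "a (Suc i) = of_int \<lceil>x\<rceil>" using that(2) by (auto simp: max_def split: if_splits)
    have "real_of_int \<lceil>x\<rceil> > 1" using ax that(2) a1[of i] by linarith
    then have "\<lceil>x\<rceil> > 1" by simp
    then have "\<lceil>x\<rceil> \<ge> 2" by linarith
    then have "of_int \<lceil>x\<rceil> \<ge> (2::real)" by simp
    have pos: "\<gamma> ^ Suc i * B > 0" using Bpos assms(3) by simp
    have "x > of_int \<lceil>x\<rceil> - 1" by linarith
    then have "x \<ge> a (Suc i) / 2" using ax \<open>of_int \<lceil>x\<rceil> \<ge> (2::real)\<close> by linarith
    then have "norm (gso b (Suc i)) \<ge> a (Suc i) / 2 * (\<gamma> ^ Suc i * B)"
      using pos by (simp add: x_def le_divide_eq)
    then show ?thesis using a1[of "Suc i"] by (simp add: ng le_divide_eq mult_ac)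
  qed
  have size: "\<bar>mu b i j\<bar> \<le> 1/2" if "1\<le>i" "i<j" "j\<le>n" for i j
    using assms(2) that unfolding LLL_reduced_def by auto
  have lovb: "3/4 * (norm (gso b i))\<^sup>2 \<le> (norm (gso b (i+1)))\<^sup>2 + (mu b i (i+1))\<^sup>2 * (norm (gso b i))\<^sup>2"
    if "1 \<le> i" "i + 1 \<le> n" for i
    using assms(2) that unfolding LLL_reduced_def by auto
  have amono: "a i \<le> a (Suc i)" if "1 \<le> i" for i
    using alpha_Suc[OF that, of b \<gamma>] by (simp add: a_def)
  have lov: "3/4 * (norm (g i))\<^sup>2 \<le> (norm (g (i+1)))\<^sup>2 + (mu b i (i+1))\<^sup>2 * (norm (g i))\<^sup>2"
    if "1 \<le> i" "i + 1 \<le> n" for i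
  proof (cases "a (Suc i) = a i")
    case True
    define t where "t = a i"
    have tp: "t\<^sup>2 > 0" using a1[of i] by (simp add: t_def)
    have "3/4 * (norm (gso b i))\<^sup>2 / t\<^sup>2 \<le> ((norm (gso b (i+1)))\<^sup>2 + (mu b i (i+1))\<^sup>2 * (norm (gso b i))\<^sup>2) / t\<^sup>2"
      using lovb[OF that] tp by (intro divide_right_mono) auto
    then show ?thesis using True by (simp add: ng t_def power_divide add_divide_distrib)
  next
    case False
    then have lt: "a i < a (Suc i)" using amono[OF that(1)] by simp
    have "norm (g i) \<le> \<gamma>^i * B" using U that by simp
    also have "... \<le> \<gamma>^(Suc i) * B / 2" using assms(3) Bpos by simp
    also have "... \<le> norm (g (i+1))" using L[OF that(1) lt] by simp
    finally have "(norm (g i))\<^sup>2 \<le> (norm (g (i+1)))\<^sup>2" by (simp add: power_mono)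
    moreover have "0 \<le> (mu b i (i+1))\<^sup>2 * (norm (g i))\<^sup>2" by simp
    moreover have "0 \<le> (norm (g i))\<^sup>2" by simp
    ultimately show ?thesis by linarith
  qed
  have LLLc: "LLL_reduced c n"
    unfolding LLL_reduced_def
  proof (intro conjI allI impI)
    fix i j assume "1 \<le> i \<and> i < j \<and> j \<le> n"
    then show "\<bar>mu c i j\<bar> \<le> 1/2" using muc size by auto
  next
    fix i assume "1 \<le> i \<and> i \<le> n - 1"
    then show "3/4 * (norm (gso c i))\<^sup>2 \<le> (norm (gso c (i+1)))\<^sup>2 + (mu c i (i+1))\<^sup>2 * (norm (gso c i))\<^sup>2"
      using lov[of i] gsoc[of i] gsoc[of "i+1"] muc[of i "i+1"] by auto
  qed
  have half: "(norm (g i))\<^sup>2 \<le> 2 * (norm (g (i+1)))\<^sup>2" if "1 \<le> i" "i + 1 \<le> n" for i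
  proof -
    have "\<bar>mu b i (i+1)\<bar>\<^sup>2 \<le> (1/2)\<^sup>2" using size[of i "i+1"] that
      by (intro power_mono) auto
    then have "(mu b i (i+1))\<^sup>2 \<le> (1/2)\<^sup>2" by simp
    then have "(mu b i (i+1))\<^sup>2 \<le> 1/4" by (simp add: power_divide)
    then have "(mu b i (i+1))\<^sup>2 * (norm (g i))\<^sup>2 \<le> 1/4 * (norm (g i))\<^sup>2"
      by (intro mult_right_mono) simp_all
    then show ?thesis using lov[OF that] by linarith
  qed
  have low: "B\<^sup>2 \<le> 2^(i-1) * (norm (g i))\<^sup>2" if "1 \<le> i" "i \<le> n" for i
    using that
  proof (induction i rule: dec_induct)
    case base then show ?case using g1 by (simp add: B_def)
  next
    case (step k)
    have "B\<^sup>2 \<le> 2^(k-1) * (norm (g k))\<^sup>2" using step by simp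
    also have "... \<le> 2^(k-1) * (2 * (norm (g (k+1)))\<^sup>2)"
      using half[of k] step by (intro mult_left_mono) auto
    also have "... = 2^(Suc k - 1) * (norm (g (Suc k)))\<^sup>2"
      using step(1) by (cases k) auto
    finally show ?case .
  qed
  have bounds: "B / 2 ^ n \<le> norm (g i) \<and> norm (g i) \<le> norm (c i) \<and> norm (c i) \<le> (2 * \<gamma>) ^ i * B"
    if i: "1 \<le> i" "i \<le> n" for i
  proof (intro conjI)
    have "B\<^sup>2 \<le> 2^(i-1) * (norm (g i))\<^sup>2" using low[OF i] .
    also have "... \<le> (2^n)\<^sup>2 * (norm (g i))\<^sup>2"
    proof (intro mult_right_mono)
      have "(2::real)^(i-1) \<le> 2^n" using i by (intro power_increasing) auto
      also have "... \<le> (2^n)\<^sup>2" by (simp add: power2_eq_square)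
      finally show "(2::real)^(i-1) \<le> (2^n)\<^sup>2" .
    qed auto
    also have "... = (2^n * norm (g i))\<^sup>2" by (simp add: power_mult_distrib)
    finally have "B \<le> 2^n * norm (g i)" by (rule power2_le_imp_le) auto
    then show "B / 2 ^ n \<le> norm (g i)" by (simp add: divide_le_eq mult.commute)
  next
    define s where "s = (\<Sum>j\<in>{1..<i}. mu b j i *\<^sub>R g j)"
    have ce: "c i = g i + s" using cexp[OF i] by (simp add: s_def)
    have "g i \<bullet> s = 0" unfolding s_def
      using inner_sum_orth[where S="{1..<i}" and g=g and j=i and a="\<lambda>j. mu b j i"] orthg i by auto
    then have pyth: "(norm (c i))\<^sup>2 = (norm (g i))\<^sup>2 + (norm s)\<^sup>2"
      unfolding ce by (intro norm_add_Pythagorean) (simp add: orthogonal_def)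
    then have "(norm (g i))\<^sup>2 \<le> (norm (c i))\<^sup>2" by simp
    then show "norm (g i) \<le> norm (c i)" by (rule power2_le_imp_le) simp
    have "(norm s)\<^sup>2 = (\<Sum>j\<in>{1..<i}. (norm (mu b j i *\<^sub>R g j))\<^sup>2)"
      unfolding s_def by (intro norm_sum_orth) (auto simp: orthg)
    also have "... \<le> (\<Sum>j\<in>{1..<i}. (\<gamma>^i * B)\<^sup>2)"
    proof (intro sum_mono)
      fix j assume j: "j \<in> {1..<i}"
      have "\<bar>mu b j i\<bar> \<le> 1" using size[of j i] j i by auto
      moreover have "norm (g j) \<le> \<gamma>^j * B" using U j by auto
      moreover have "\<gamma>^j \<le> \<gamma>^i" using j assms(3) by (intro power_increasing) auto
      then have "\<gamma>^j * B \<le> \<gamma>^i * B" using Bpos by simp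
      ultimately have "\<bar>mu b j i\<bar> * norm (g j) \<le> 1 * (\<gamma>^i * B)"
        by (intro mult_mono) auto
      then have "norm (mu b j i *\<^sub>R g j) \<le> \<gamma>^i * B" by simp
      then show "(norm (mu b j i *\<^sub>R g j))\<^sup>2 \<le> (\<gamma>^i * B)\<^sup>2" by (simp add: power_mono)
    qed
    finally have sb: "(norm s)\<^sup>2 \<le> (i - 1) * (\<gamma>^i * B)\<^sup>2" using i by simp
    have gb: "(norm (g i))\<^sup>2 \<le> (\<gamma>^i * B)\<^sup>2" using U[OF i(1)] by (simp add: power_mono)
    have "real i \<le> 4^i"
    proof -
      have "i < 2^i" by (rule less_exp)
      also have "(2::nat)^i \<le> 4^i" by (simp add: power_mono)
      finally show ?thesis by (metis less_imp_le of_nat_le_iff of_nat_numeral of_nat_power)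
    qed
    have "(norm (c i))\<^sup>2 \<le> i * (\<gamma>^i * B)\<^sup>2"
      using pyth sb gb i by (simp add: of_nat_diff algebra_simps)
    also have "... \<le> 4^i * (\<gamma>^i * B)\<^sup>2" using \<open>real i \<le> 4^i\<close> by (intro mult_right_mono) auto
    also have "... = ((2 * \<gamma>) ^ i * B)\<^sup>2"
    proof -
      have f: "(4::real)^i = 2^i * 2^i" by (simp add: power_mult_distrib[symmetric])
      show ?thesis unfolding f by (simp add: power_mult_distrib power2_eq_square algebra_simps)
    qed
    finally show "norm (c i) \<le> (2 * \<gamma>) ^ i * B"
      by (rule power2_le_imp_le) (use Bpos assms(3) in auto)
  qed
  have cA: "\<And>j. A_map b n \<gamma> (b j) = c j" by (simp add: c_def A_def)
  show ?thesis unfolding cc cA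
    using LLLc bounds gsoc c1 by (auto simp: B_def)
qed



end
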